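(* For every parallel offering instance $I$, the policy $\mathsf{ALG}_{\mathtt{par}}$ defined below satisfies $R_{\mathsf{ALG}_{\mathtt{par}}}(I)\ge(1-1/e)\,\mathrm{LP}_{\mathtt{par}}(I)\ge(1-1/e)\,\mathsf{OPT}_{\mathtt{par}}(I)$. Policy $\mathsf{ALG}_{\mathtt{par}}$: take an optimal solution $y$ of $\mathrm{LP}_{\mathtt{par}}(I)$ and, independently of the candidates' acceptance decisions, generate a random matrix $Y\in\{0,1\}^{n\times k}$ by the Gandhi–Khuller–Parthasarathy–Srinivasan dependent rounding of $y$ on the complete bipartite graph between candidates $[n]$ and positions $[k]$ (edge weights $y_{ij}$). Form for each position $j$ the list $L_j=\{i:Y_{ij}=1\}$ (so $|L_j|\le T$ and each candidate belongs to at most one list). Run the lists in parallel: in each round, for each position $j$ not yet filled, send an offer for $j$ to the not-yet-offered candidate of $L_j$ with largest $v_{ij}$ (if any remains).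
   Context: Parallel offering problem: integers $1\le k\le T\le n$; $n$ candidates, $k$ positions; $p_{ij}\in[0,1]$ acceptance probability and $v_{ij}\ge0$ value of candidate $i$ for position $j$; acceptance indicators $A_{ij}$ with $\mathbb{P}(A_{ij}=1)=p_{ij}$, possibly correlated across positions for the same candidate but independent across candidates, fixed before the process. In each of $T$ rounds the firm may send at most one offer per unfilled position; each candidate receives at most one offer in total; if $i$ receives an offer for $j$ and $A_{ij}=1$ then $j$ is filled and the firm earns $v_{ij}$. $R_\pi(I)$ is expected total value; $\mathsf{OPT}_{\mathtt{par}}(I)$ the supremum over all (adaptive) policies. $\mathrm{LP}_{\mathtt{par}}(I)$: maximize $\sum_{j,i}v_{ij}p_{ij}y_{ij}$ s.t. $\sum_i y_{ij}\le T\ \forall j$; $\sum_ip_{ij}y_{ij}\le1\ \forall j$; $\sum_jy_{ij}\le1\ \forall i$; $0\le y_{ij}\le1$. The GKPS dependent rounding of weights $y_e\in[0,1]$ on the edges of a bipartite graph outputs random $Y_e\in\{0,1\}$ with: (P1) $\mathbb{E}Y_e=y_e$; (P2) for every vertex $u$, $\sum_{e\ni u}Y_e\in\{\lfloor\ell_u\rfloor,\lceil\ell_u\rceil\}$ almost surely, where $\ell_u=\sum_{e\ni u}y_e$; (P3) for every vertex $u$, every set $S$ of edges incident to $u$ and $b\in\{0,1\}$, $\mathbb{P}(\bigcap_{e\in S}\{Y_e=b\})\le\prod_{e\in S}\mathbb{P}(Y_e=b)$. *)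

theory Defs
  imports "HOL-Probability.Probability"
begin

text \<open>Candidates are 0..<n, positions are 0..<k.
  A history is the list of rounds played so far; each round is the list of
  offers (candidate i, position j, accepted?) made in that round.\<close>

type_synonym history = "(nat \<times> nat \<times> bool) list list"

text \<open>A (deterministic, adaptive) policy maps the history to the offers of the
  next round: for each position j, optionally a candidate to receive an offer for j.\<close>

type_synonym policy = "history \<Rightarrow> nat \<Rightarrow> nat option"

definition filled :: "history \<Rightarrow> nat \<Rightarrow> bool" where
  "filled h j \<longleftrightarrow> (\<exists>i. (i, j, True) \<in> set (concat h))"

definition offered :: "history \<Rightarrow> nat \<Rightarrow> bool" where
  "offered h i \<longleftrightarrow> (\<exists>j b. (i, j, b) \<in> set (concat h))"

definition valid_round :: "nat \<Rightarrow> nat \<Rightarrow> history \<Rightarrow> (nat \<Rightarrow> nat option) \<Rightarrow> bool" where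
  "valid_round n k h off \<longleftrightarrow>
     (\<forall>j i. off j = Some i \<longrightarrow> j < k \<and> \<not> filled h j \<and> i < n \<and> \<not> offered h i) \<and>
     (\<forall>j j' i. off j = Some i \<and> off j' = Some i \<longrightarrow> j = j')"

text \<open>Outcome of one round given the acceptance indicators a (a i j = A_ij).
  An invalid round of offers is ignored (no offers are sent).\<close>

definition round_outcome ::
  "nat \<Rightarrow> nat \<Rightarrow> history \<Rightarrow> (nat \<Rightarrow> nat option) \<Rightarrow> (nat \<Rightarrow> nat \<Rightarrow> bool) \<Rightarrow> (nat \<times> nat \<times> bool) list" where
  "round_outcome n k h off a =
     (if valid_round n k h off
      then concat (map (\<lambda>j. case off j of None \<Rightarrow> [] | Some i \<Rightarrow> [(i, j, a i j)]) [0..<k])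
      else [])"

fun run :: "nat \<Rightarrow> nat \<Rightarrow> policy \<Rightarrow> (nat \<Rightarrow> nat \<Rightarrow> bool) \<Rightarrow> nat \<Rightarrow> history" where
  "run n k pol a 0 = []"
| "run n k pol a (Suc t) =
     (let h = run n k pol a t in h @ [round_outcome n k h (pol h) a])"

definition reward :: "(nat \<Rightarrow> nat \<Rightarrow> real) \<Rightarrow> history \<Rightarrow> real" where
  "reward v h = (\<Sum>(i, j, b) \<leftarrow> concat h. if b then v i j else 0)"

text \<open>Joint law of the acceptance indicators: D i is the law of candidate i's
  acceptance vector (j \<mapsto> A_ij), arbitrary correlation across positions;
  independent across candidates (product measure).\<close>

definition accept_dist :: "nat \<Rightarrow> (nat \<Rightarrow> (nat \<Rightarrow> bool) pmf) \<Rightarrow> (nat \<Rightarrow> nat \<Rightarrow> bool) pmf" where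
  "accept_dist n D = Pi_pmf {..<n} (\<lambda>_. False) D"

definition R_pol :: "nat \<Rightarrow> nat \<Rightarrow> nat \<Rightarrow> (nat \<Rightarrow> (nat \<Rightarrow> bool) pmf) \<Rightarrow> (nat \<Rightarrow> nat \<Rightarrow> real)
    \<Rightarrow> policy \<Rightarrow> real" where
  "R_pol n k T D v pol =
     measure_pmf.expectation (accept_dist n D) (\<lambda>a. reward v (run n k pol a T))"

text \<open>Randomized policies (pmf over deterministic policies, drawn independently of
  the acceptance indicators).\<close>

definition R_rand :: "nat \<Rightarrow> nat \<Rightarrow> nat \<Rightarrow> (nat \<Rightarrow> (nat \<Rightarrow> bool) pmf) \<Rightarrow> (nat \<Rightarrow> nat \<Rightarrow> real)
    \<Rightarrow> policy pmf \<Rightarrow> real" where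
  "R_rand n k T D v Q = measure_pmf.expectation Q (\<lambda>pol. R_pol n k T D v pol)"

definition OPT_par :: "nat \<Rightarrow> nat \<Rightarrow> nat \<Rightarrow> (nat \<Rightarrow> (nat \<Rightarrow> bool) pmf) \<Rightarrow> (nat \<Rightarrow> nat \<Rightarrow> real) \<Rightarrow> real" where
  "OPT_par n k T D v = (SUP Q. R_rand n k T D v Q)"

definition lp_feasible :: "nat \<Rightarrow> nat \<Rightarrow> nat \<Rightarrow> (nat \<Rightarrow> nat \<Rightarrow> real) \<Rightarrow> (nat \<Rightarrow> nat \<Rightarrow> real) \<Rightarrow> bool" where
  "lp_feasible n k T p y \<longleftrightarrow>
     (\<forall>j<k. (\<Sum>i<n. y i j) \<le> real T) \<and>
     (\<forall>j<k. (\<Sum>i<n. p i j * y i j) \<le> 1) \<and>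
     (\<forall>i<n. (\<Sum>j<k. y i j) \<le> 1) \<and>
     (\<forall>i<n. \<forall>j<k. 0 \<le> y i j \<and> y i j \<le> 1)"

definition lp_obj :: "nat \<Rightarrow> nat \<Rightarrow> (nat \<Rightarrow> nat \<Rightarrow> real) \<Rightarrow> (nat \<Rightarrow> nat \<Rightarrow> real) \<Rightarrow> (nat \<Rightarrow> nat \<Rightarrow> real) \<Rightarrow> real" where
  "lp_obj n k p v y = (\<Sum>j<k. \<Sum>i<n. v i j * p i j * y i j)"

definition LP_par :: "nat \<Rightarrow> nat \<Rightarrow> nat \<Rightarrow> (nat \<Rightarrow> nat \<Rightarrow> real) \<Rightarrow> (nat \<Rightarrow> nat \<Rightarrow> real) \<Rightarrow> real" where
  "LP_par n k T p v = (SUP y \<in> {y. lp_feasible n k T p y}. lp_obj n k p v y)"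

definition lp_optimal :: "nat \<Rightarrow> nat \<Rightarrow> nat \<Rightarrow> (nat \<Rightarrow> nat \<Rightarrow> real) \<Rightarrow> (nat \<Rightarrow> nat \<Rightarrow> real) \<Rightarrow> (nat \<Rightarrow> nat \<Rightarrow> real) \<Rightarrow> bool" where
  "lp_optimal n k T p v y \<longleftrightarrow> lp_feasible n k T p y \<and>
     (\<forall>y'. lp_feasible n k T p y' \<longrightarrow> lp_obj n k p v y' \<le> lp_obj n k p v y)"

text \<open>GKPS dependent rounding of weights y on the complete bipartite graph
  [n] x [k], characterised by properties (P1)-(P3). Y i j = True means Y_ij = 1.\<close>

definition gkps_rounding :: "nat \<Rightarrow> nat \<Rightarrow> (nat \<Rightarrow> nat \<Rightarrow> real) \<Rightarrow> (nat \<Rightarrow> nat \<Rightarrow> bool) pmf \<Rightarrow> bool" where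
  "gkps_rounding n k y Yd \<longleftrightarrow>
     \<comment> \<open>(P1)\<close>
     (\<forall>i<n. \<forall>j<k. measure_pmf.prob Yd {Y. Y i j} = y i j) \<and>
     \<comment> \<open>(P2) at candidate vertices and at position vertices\<close>
     (\<forall>Y\<in>set_pmf Yd. \<forall>i<n.
        real (card {j. j < k \<and> Y i j}) \<in> {of_int \<lfloor>\<Sum>j<k. y i j\<rfloor>, of_int \<lceil>\<Sum>j<k. y i j\<rceil>}) \<and>
     (\<forall>Y\<in>set_pmf Yd. \<forall>j<k.
        real (card {i. i < n \<and> Y i j}) \<in> {of_int \<lfloor>\<Sum>i<n. y i j\<rfloor>, of_int \<lceil>\<Sum>i<n. y i j\<rceil>}) \<and>
     \<comment> \<open>(P3) at candidate vertices and at position vertices\<close>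
     (\<forall>i<n. \<forall>S\<subseteq>{..<k}. \<forall>b.
        measure_pmf.prob Yd {Y. \<forall>j\<in>S. Y i j = b} \<le> (\<Prod>j\<in>S. measure_pmf.prob Yd {Y. Y i j = b})) \<and>
     (\<forall>j<k. \<forall>S\<subseteq>{..<n}. \<forall>b.
        measure_pmf.prob Yd {Y. \<forall>i\<in>S. Y i j = b} \<le> (\<Prod>i\<in>S. measure_pmf.prob Yd {Y. Y i j = b}))"

definition alg_policy :: "nat \<Rightarrow> nat \<Rightarrow> (nat \<Rightarrow> nat \<Rightarrow> real) \<Rightarrow> (nat \<Rightarrow> nat \<Rightarrow> bool) \<Rightarrow> policy" where
  "alg_policy n k v Y h j =
     (let C = {i. i < n \<and> Y i j \<and> \<not> offered h i} in
      if j < k \<and> \<not> filled h j \<and> C \<noteq> {}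
      then Some (LEAST i. i \<in> C \<and> (\<forall>i'\<in>C. v i' j \<le> v i j))
      else None)"

definition R_alg :: "nat \<Rightarrow> nat \<Rightarrow> nat \<Rightarrow> (nat \<Rightarrow> (nat \<Rightarrow> bool) pmf) \<Rightarrow> (nat \<Rightarrow> nat \<Rightarrow> real)
    \<Rightarrow> (nat \<Rightarrow> nat \<Rightarrow> bool) pmf \<Rightarrow> real" where
  "R_alg n k T D v Yd = measure_pmf.expectation Yd (\<lambda>Y. R_pol n k T D v (alg_policy n k v Y))"

end

theory Submission
  imports Defs "HOL-Probability.Probability"
begin


definition EE where "EE n k pol a t = set (concat (run n k pol a t))"

abbreviation RR where "RR n k pol a t \<equiv> set (round_outcome n k (run n k pol a t) (pol (run n k pol a t)) a)"

lemma set_round: "x \<in> set (round_outcome n k h off a) \<longleftrightarrow>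
   valid_round n k h off \<and> (\<exists>i j. x = (i,j,a i j) \<and> j < k \<and> off j = Some i)"
  unfolding round_outcome_def by (auto split: option.splits)

lemma EE_0[simp]: "EE n k pol a 0 = {}" by (simp add: EE_def)

lemma EE_Suc: "EE n k pol a (Suc t) = EE n k pol a t \<union> RR n k pol a t"
  by (simp add: Let_def EE_def)

lemma filled_EE: "filled (run n k pol a t) j \<longleftrightarrow> (\<exists>i. (i,j,True) \<in> EE n k pol a t)"
  by (simp add: filled_def EE_def)
lemma offered_EE: "offered (run n k pol a t) i \<longleftrightarrow> (\<exists>j b. (i,j,b) \<in> EE n k pol a t)"
  by (simp add: offered_def EE_def)

lemma RR_mem: "(i,j,b) \<in> RR n k pol a t \<Longrightarrow>
   valid_round n k (run n k pol a t) (pol (run n k pol a t)) \<and> j < k \<and> b = a i j \<and> pol (run n k pol a t) j = Some i"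
  unfolding set_round by auto

lemma RR_mem_valid: "(i,j,b) \<in> RR n k pol a t \<Longrightarrow>
   i < n \<and> j < k \<and> b = a i j \<and> pol (run n k pol a t) j = Some i \<and>
   (\<forall>i'. \<not> (i',j,True) \<in> EE n k pol a t) \<and> (\<forall>j' b'. \<not> (i,j',b') \<in> EE n k pol a t) \<and>
   (\<forall>j'. pol (run n k pol a t) j' = Some i \<longrightarrow> j' = j)"
  using RR_mem[of i j b n k pol a t] unfolding valid_round_def filled_EE offered_EE by blast

lemma inv1: "(i,j,b) \<in> EE n k pol a t \<Longrightarrow> i<n \<and> j<k \<and> b = a i j"
proof (induction t)
  case 0 then show ?case by simp
next
  case (Suc t)
  then have "(i,j,b) \<in> EE n k pol a t \<or> (i,j,b) \<in> RR n k pol a t" by (simp add: EE_Suc)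
  then show ?case using Suc.IH RR_mem_valid by blast
qed

lemma inv_acc_unique: "(i,j,True) \<in> EE n k pol a t \<Longrightarrow> (i',j,True) \<in> EE n k pol a t \<Longrightarrow> i = i'"
proof (induction t)
  case 0 then show ?case by simp
next
  case (Suc t)
  then have "(i,j,True) \<in> EE n k pol a t \<or> (i,j,True) \<in> RR n k pol a t"
     "(i',j,True) \<in> EE n k pol a t \<or> (i',j,True) \<in> RR n k pol a t" by (simp_all add: EE_Suc)
  then show ?case using Suc.IH RR_mem_valid[of i j True n k pol a t] RR_mem_valid[of i' j True n k pol a t]
    by (metis option.inject)
qed

lemma inv_cand_unique: "(i,j,b) \<in> EE n k pol a t \<Longrightarrow> (i,j',b') \<in> EE n k pol a t \<Longrightarrow> j = j'"
proof (induction t)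
  case 0 then show ?case by simp
next
  case (Suc t)
  then have "(i,j,b) \<in> EE n k pol a t \<or> (i,j,b) \<in> RR n k pol a t"
     "(i,j',b') \<in> EE n k pol a t \<or> (i,j',b') \<in> RR n k pol a t" by (simp_all add: EE_Suc)
  then show ?case using Suc.IH RR_mem_valid[of i j b n k pol a t] RR_mem_valid[of i j' b' n k pol a t]
    by metis
qed

lemma inv_count: "card {e \<in> EE n k pol a t. fst (snd e) = j} \<le> t"
proof (induction t)
  case 0 then show ?case by simp
next
  case (Suc t)
  let ?h = "run n k pol a t"
  let ?R = "RR n k pol a t"
  have sub: "{e \<in> ?R. fst (snd e) = j} \<subseteq> {(the (pol ?h j), j, a (the (pol ?h j)) j)}"
    unfolding set_round by auto
  have eq: "{e \<in> EE n k pol a (Suc t). fst (snd e) = j} = {e \<in> EE n k pol a t. fst (snd e) = j} \<union> {e \<in> ?R. fst (snd e) = j}"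
    unfolding EE_Suc by auto
  have c1: "card ({e \<in> EE n k pol a t. fst (snd e) = j} \<union> {e \<in> ?R. fst (snd e) = j}) \<le> card {e \<in> EE n k pol a t. fst (snd e) = j} + card {e \<in> ?R. fst (snd e) = j}"
    by (rule card_Un_le)
  have c2: "card {e \<in> ?R. fst (snd e) = j} \<le> 1"
    using card_mono[OF _ sub] by simp
  show ?case using Suc c1 c2 unfolding eq by linarith
qed

lemma distinct_concat_map:
  assumes "distinct L" "\<And>j. \<forall>x\<in>set (f j). fst (snd x) = j" "\<And>j. length (f j) \<le> 1"
  shows "distinct (concat (map f L))"
  using assms
proof (induction L)
  case Nil then show ?case by simp
next
  case (Cons j L)
  have d1: "distinct (f j)" using Cons.prems(3)[of j]
    by (cases "f j") (auto)
  have "set (f j) \<inter> set (concat (map f L)) = {}"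
  proof (rule ccontr)
    assume "set (f j) \<inter> set (concat (map f L)) \<noteq> {}"
    then obtain x j' where "x \<in> set (f j)" "j' \<in> set L" "x \<in> set (f j')" by auto
    moreover have "fst (snd x) = j" "fst (snd x) = j'" using Cons.prems(2) calculation by blast+
    ultimately show False using Cons.prems(1) by auto
  qed
  then show ?case using Cons d1 by simp
qed

lemma inv_distinct: "distinct (concat (run n k pol a t))"
proof (induction t)
  case 0 then show ?case by simp
next
  case (Suc t)
  let ?h = "run n k pol a t"
  let ?R = "round_outcome n k ?h (pol ?h) a"
  have dR: "distinct ?R"
    unfolding round_outcome_def
    by (auto intro!: distinct_concat_map split: option.splits)
  have disj: "set (concat ?h) \<inter> set ?R = {}"
  proof (rule ccontr)
    assume "set (concat ?h) \<inter> set ?R \<noteq> {}"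
    then obtain i j b where "(i,j,b) \<in> EE n k pol a t" "(i,j,b) \<in> RR n k pol a t"
      unfolding EE_def by auto
    then show False using RR_mem_valid by blast
  qed
  show ?case using Suc dR disj by (simp add: Let_def)
qed


lemma reward_eq: "reward v (run n k pol a t) =
   (\<Sum>i<n. \<Sum>j<k. if (i,j,True) \<in> EE n k pol a t then v i j else 0)"
proof -
  let ?E = "EE n k pol a t"
  let ?g = "\<lambda>(i::nat,j::nat,b::bool). if b then v i j else (0::real)"
  let ?Q = "{q \<in> {..<n}\<times>{..<k}. (fst q, snd q, True) \<in> ?E}"
  have fin: "finite ?E" unfolding EE_def by simp
  have "reward v (run n k pol a t) = sum ?g ?E"
    unfolding reward_def EE_def by (rule sum_list_distinct_conv_sum_set[OF inv_distinct])
  also have "\<dots> = sum ?g {e\<in>?E. snd (snd e)}"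
    by (rule sum.mono_neutral_right) (use fin in \<open>auto split: if_splits\<close>)
  also have "{e\<in>?E. snd (snd e)} = (\<lambda>(i,j). (i,j,True)) ` ?Q"
    using inv1 by fastforce
  also have "sum ?g \<dots> = sum (\<lambda>(i,j). v i j) ?Q"
    by (subst sum.reindex) (auto simp: inj_on_def case_prod_unfold)
  also have "\<dots> = (\<Sum>q\<in>{..<n}\<times>{..<k}. if (fst q, snd q, True) \<in> ?E then v (fst q) (snd q) else 0)"
    by (subst sum.inter_filter[symmetric]) (auto simp: case_prod_unfold)
  also have "\<dots> = (\<Sum>i<n. \<Sum>j<k. if (i,j,True) \<in> ?E then v i j else 0)"
    by (simp add: sum.cartesian_product case_prod_unfold)
  finally show ?thesis .
qed

lemma round_same:
  assumes "\<not> (valid_round n k h off \<and> (\<exists>j. off j = Some i))"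
  shows "round_outcome n k h off a = round_outcome n k h off (a(i:=c))"
  using assms unfolding round_outcome_def
  by (auto intro!: arg_cong[where f=concat] map_cong split: option.splits)

lemma indep_run_aux:
  "((\<not> (\<exists>j b. (i,j,b) \<in> EE n k pol a t)) \<longrightarrow> run n k pol a t = run n k pol (a(i:=c)) t) \<and>
   (\<forall>j. (\<exists>b. (i,j,b) \<in> EE n k pol a t) \<longleftrightarrow> (\<exists>b. (i,j,b) \<in> EE n k pol (a(i:=c)) t))"
proof (induction t)
  case 0 then show ?case by simp
next
  case (Suc t)
  let ?a' = "a(i:=c)"
  let ?h = "run n k pol a t"
  let ?h' = "run n k pol ?a' t"
  show ?case
  proof (cases "\<exists>j b. (i,j,b) \<in> EE n k pol a t")
    case True
    then have T': "\<exists>j b. (i,j,b) \<in> EE n k pol ?a' t" using Suc.IH by blast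
    have "\<forall>j b. (i,j,b) \<notin> RR n k pol a t" using True RR_mem_valid by blast
    moreover have "\<forall>j b. (i,j,b) \<notin> RR n k pol ?a' t" using T' RR_mem_valid by blast
    ultimately show ?thesis using Suc.IH True unfolding EE_Suc by blast
  next
    case False
    then have heq: "?h = ?h'" using Suc.IH by blast
    show ?thesis
    proof (cases "valid_round n k ?h (pol ?h) \<and> (\<exists>j. pol ?h j = Some i)")
      case True
      then obtain j0 where j0: "pol ?h j0 = Some i" by blast
      have inj: "\<forall>j. pol ?h j = Some i \<longrightarrow> j = j0" using True j0 unfolding valid_round_def by blast
      have j0k: "j0 < k" using True j0 unfolding valid_round_def by blast
      have m1: "(i,j0,a i j0) \<in> RR n k pol a t" unfolding set_round using True j0 j0k by blast
      have m2: "(i,j0,?a' i j0) \<in> RR n k pol ?a' t" unfolding set_round using True j0 j0k heq by auto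
      have c1: "\<forall>j b. (i,j,b) \<in> RR n k pol a t \<longrightarrow> j = j0" using RR_mem_valid inj by blast
      have c2: "\<forall>j b. (i,j,b) \<in> RR n k pol ?a' t \<longrightarrow> j = j0" using RR_mem_valid inj heq by metis
      have "\<forall>j. (\<exists>b. (i,j,b) \<in> EE n k pol a (Suc t)) \<longleftrightarrow> j = j0"
        using False m1 c1 unfolding EE_Suc by blast
      moreover have "\<forall>j. (\<exists>b. (i,j,b) \<in> EE n k pol ?a' (Suc t)) \<longleftrightarrow> j = j0"
        using False Suc.IH m2 c2 unfolding EE_Suc by blast
      ultimately show ?thesis using m1 unfolding EE_Suc by blast
    next
      case nv: False
      have "round_outcome n k ?h (pol ?h) a = round_outcome n k ?h (pol ?h) ?a'"
        using round_same[OF nv] .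
      then have req: "run n k pol a (Suc t) = run n k pol ?a' (Suc t)" using heq by (simp add: Let_def)
      have EEq: "EE n k pol a (Suc t) = EE n k pol ?a' (Suc t)" unfolding EE_def req ..
      show ?thesis unfolding EEq req by blast
    qed
  qed
qed

lemma indep_run:
  "(\<exists>b. (i,j,b) \<in> EE n k pol (a(i:=c)) t) \<longleftrightarrow> (\<exists>b. (i,j,b) \<in> EE n k pol a t)"
  using indep_run_aux by blast


lemma pmf_integrable_bound:
  fixes f :: "'a \<Rightarrow> real"
  assumes "\<And>x. \<bar>f x\<bar> \<le> B"
  shows "integrable (measure_pmf M) f"
  by (rule measure_pmf.integrable_const_bound[where B=B]) (use assms in auto)

lemma integral_pair_pmf_real:
  fixes f :: "'a \<times> 'b \<Rightarrow> real"
  assumes nn: "\<And>x. 0 \<le> f x" and bd: "\<And>x. f x \<le> B"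
  shows "measure_pmf.expectation (pair_pmf M N) f =
         measure_pmf.expectation M (\<lambda>x. measure_pmf.expectation N (\<lambda>y. f (x,y)))"
proof -
  have i1: "\<And>x. integrable (measure_pmf N) (\<lambda>y. f (x,y))"
    by (rule pmf_integrable_bound[where B=B]) (use nn bd in \<open>auto simp: abs_of_nonneg\<close>)
  have inner: "\<And>x. (\<integral>\<^sup>+y. ennreal (f (x,y)) \<partial>N) = ennreal (measure_pmf.expectation N (\<lambda>y. f (x,y)))"
    by (rule nn_integral_eq_integral[OF i1]) (use nn in auto)
  have "measure_pmf.expectation (pair_pmf M N) f = enn2real (\<integral>\<^sup>+x. ennreal (f x) \<partial>pair_pmf M N)"
    by (rule integral_eq_nn_integral) (use nn in auto)
  also have "\<dots> = enn2real (\<integral>\<^sup>+a. \<integral>\<^sup>+b. ennreal (f (a,b)) \<partial>N \<partial>M)"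
    by (simp add: nn_integral_pair_pmf')
  also have "\<dots> = enn2real (\<integral>\<^sup>+a. ennreal (measure_pmf.expectation N (\<lambda>y. f (a,y))) \<partial>M)"
    by (simp add: inner)
  also have "\<dots> = measure_pmf.expectation M (\<lambda>x. measure_pmf.expectation N (\<lambda>y. f (x,y)))"
    by (rule integral_eq_nn_integral[symmetric]) (use nn in \<open>auto intro!: integral_nonneg_AE\<close>)
  finally show ?thesis .
qed

lemma expectation_ind:
  "measure_pmf.expectation M (\<lambda>x. if P x then (c::real) else 0) = c * measure_pmf.prob M {x. P x}"
proof -
  have "(\<lambda>x. if P x then c else 0) = (\<lambda>x. c * indicator {x. P x} x)"
    by (auto simp: indicator_def)
  then show ?thesis by simp
qed

lemma prob_as_expectation:
  "measure_pmf.prob M {x. P x} = measure_pmf.expectation M (\<lambda>x. of_bool (P x))"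
  using expectation_ind[of M P 1] by (simp add: of_bool_def)

lemma sum_prob_le:
  assumes "finite I" "\<And>a. card {i\<in>I. P i a} \<le> B"
  shows "(\<Sum>i\<in>I. measure_pmf.prob M {a. P i a}) \<le> real B"
proof -
  have "(\<Sum>i\<in>I. measure_pmf.prob M {a. P i a}) = (\<Sum>i\<in>I. measure_pmf.expectation M (\<lambda>a. of_bool (P i a)))"
    by (simp add: prob_as_expectation)
  also have "\<dots> = measure_pmf.expectation M (\<lambda>a. \<Sum>i\<in>I. of_bool (P i a))"
    by (rule Bochner_Integration.integral_sum[symmetric]) (rule pmf_integrable_bound[where B=1], simp)
  also have "\<dots> \<le> real B"
  proof (rule measure_pmf.integral_le_const)
    show "integrable (measure_pmf M) (\<lambda>a. \<Sum>i\<in>I. of_bool (P i a) :: real)"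
      by (rule pmf_integrable_bound[where B="card I"]) (use assms in \<open>auto simp: abs_of_nonneg sum.If_cases of_bool_def intro!: card_mono\<close>)
    have "\<And>a. (\<Sum>i\<in>I. of_bool (P i a) :: real) = real (card {i\<in>I. P i a})"
      using assms(1) by (simp add: of_bool_def sum.If_cases Int_def conj_commute)
    then show "AE a in measure_pmf M. (\<Sum>i\<in>I. of_bool (P i a) :: real) \<le> real B"
      using assms(2) by simp
  qed
  finally show ?thesis .
qed


lemma integrable_if[intro]: "integrable (measure_pmf M) (\<lambda>a. if P a then (c::real) else 0)"
  by (rule pmf_integrable_bound[where B="\<bar>c\<bar>"]) auto

lemma integral_sum2:
  fixes f :: "'i \<Rightarrow> 'j \<Rightarrow> 'a \<Rightarrow> real"
  assumes "\<And>i j. integrable (measure_pmf M) (f i j)"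
  shows "measure_pmf.expectation M (\<lambda>a. \<Sum>i\<in>I. \<Sum>j\<in>J. f i j a) = (\<Sum>i\<in>I. \<Sum>j\<in>J. measure_pmf.expectation M (f i j))"
proof -
  have "measure_pmf.expectation M (\<lambda>a. \<Sum>i\<in>I. \<Sum>j\<in>J. f i j a) = (\<Sum>i\<in>I. measure_pmf.expectation M (\<lambda>a. \<Sum>j\<in>J. f i j a))"
    by (rule Bochner_Integration.integral_sum) (use assms in auto)
  also have "\<dots> = (\<Sum>i\<in>I. \<Sum>j\<in>J. measure_pmf.expectation M (f i j))"
    by (intro sum.cong refl Bochner_Integration.integral_sum) (use assms in auto)
  finally show ?thesis .
qed

lemma prob_pair_prod:
  "measure_pmf.prob (pair_pmf M N) {(x,y). P x \<and> Q y} = measure_pmf.prob M {x. P x} * measure_pmf.prob N {y. Q y}"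
proof -
  have "measure_pmf.prob (pair_pmf M N) {(x,y). P x \<and> Q y} =
        measure_pmf.expectation (pair_pmf M N) (\<lambda>z. of_bool (P (fst z) \<and> Q (snd z)))"
    using prob_as_expectation[of "pair_pmf M N" "\<lambda>z. P (fst z) \<and> Q (snd z)"] by (simp add: case_prod_unfold)
  also have "\<dots> = measure_pmf.expectation M (\<lambda>x. measure_pmf.expectation N (\<lambda>y. of_bool (P x \<and> Q y)))"
    using integral_pair_pmf_real[where f="\<lambda>z. of_bool (P (fst z) \<and> Q (snd z))" and B=1 and M=M and N=N] by simp
  also have "\<dots> = measure_pmf.expectation M (\<lambda>x. if P x then measure_pmf.prob N {y. Q y} else 0)"
    by (intro Bochner_Integration.integral_cong refl) (simp add: prob_as_expectation)
  also have "\<dots> = measure_pmf.prob N {y. Q y} * measure_pmf.prob M {x. P x}"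
    by (rule expectation_ind)
  finally show ?thesis by simp
qed

lemma accept_dist_split:
  assumes "i < n"
  shows "measure_pmf.prob (accept_dist n D) {a. G a} =
         measure_pmf.prob (pair_pmf (D i) (Pi_pmf ({..<n}-{i}) (\<lambda>_. False) D)) {(y,f). G (f(i:=y))}"
proof -
  have "insert i ({..<n}-{i}) = {..<n}" using assms by auto
  then have "accept_dist n D = map_pmf (\<lambda>(y,f). f(i:=y)) (pair_pmf (D i) (Pi_pmf ({..<n}-{i}) (\<lambda>_. False) D))"
    unfolding accept_dist_def using Pi_pmf_insert[of "{..<n}-{i}" i "\<lambda>_. False" D] by simp
  then show ?thesis by (simp add: vimage_def case_prod_unfold)
qed

lemma indep_prob:
  assumes "i < n" "\<And>a c. F (a(i:=c)) = F a"
  shows "measure_pmf.prob (accept_dist n D) {a. a i j \<and> F a} =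
         measure_pmf.prob (D i) {x. x j} * measure_pmf.prob (accept_dist n D) {a. F a}"
proof -
  let ?P = "pair_pmf (D i) (Pi_pmf ({..<n}-{i}) (\<lambda>_. False) D)"
  have "measure_pmf.prob (accept_dist n D) {a. a i j \<and> F a} = measure_pmf.prob ?P {(y,f). y j \<and> F f}"
    using accept_dist_split[OF assms(1), of D "\<lambda>a. a i j \<and> F a"] assms(2) by simp
  also have "\<dots> = measure_pmf.prob (D i) {x. x j} * measure_pmf.prob (Pi_pmf ({..<n}-{i}) (\<lambda>_. False) D) {f. F f}"
    by (rule prob_pair_prod)
  also have "measure_pmf.prob (Pi_pmf ({..<n}-{i}) (\<lambda>_. False) D) {f. F f} = measure_pmf.prob ?P {(y,f). True \<and> F f}"
  proof -
    have "measure_pmf.prob ?P {(y,f). True \<and> F f} = measure_pmf.prob (D i) {x. True} * measure_pmf.prob (Pi_pmf ({..<n}-{i}) (\<lambda>_. False) D) {f. F f}"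
      by (rule prob_pair_prod)
    then show ?thesis by simp
  qed
  also have "\<dots> = measure_pmf.prob (accept_dist n D) {a. F a}"
    using accept_dist_split[OF assms(1), of D "\<lambda>a. F a"] assms(2) by simp
  finally show ?thesis .
qed

lemma R_pol_bound:
  assumes hp: "\<forall>i<n. \<forall>j<k. 0 \<le> p i j \<and> p i j \<le> 1"
    and hv: "\<forall>i<n. \<forall>j<k. 0 \<le> v i j"
    and hD: "\<forall>i<n. \<forall>j<k. measure_pmf.prob (D i) {a. a j} = p i j"
    and opt: "lp_optimal n k T p v y"
  shows "0 \<le> R_pol n k T D v pol \<and> R_pol n k T D v pol \<le> lp_obj n k p v y"
proof -
  let ?M = "accept_dist n D"
  define yv where "yv i j = measure_pmf.prob ?M {a. \<exists>b. (i,j,b) \<in> EE n k pol a T}" for i j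
  have acc: "measure_pmf.prob ?M {a. (i,j,True) \<in> EE n k pol a T} = p i j * yv i j"
    if "i < n" "j < k" for i j
  proof -
    have "{a. (i,j,True) \<in> EE n k pol a T} = {a. a i j \<and> (\<exists>b. (i,j,b) \<in> EE n k pol a T)}"
      using inv1 by fastforce
    then show ?thesis unfolding yv_def
      using indep_prob[of i n "\<lambda>a. \<exists>b. (i,j,b) \<in> EE n k pol a T" D j] that hD indep_run by simp
  qed
  have "R_pol n k T D v pol = measure_pmf.expectation ?M
      (\<lambda>a. \<Sum>i<n. \<Sum>j<k. if (i,j,True) \<in> EE n k pol a T then v i j else 0)"
    unfolding R_pol_def reward_eq ..
  also have "\<dots> = (\<Sum>i<n. \<Sum>j<k. measure_pmf.expectation ?M (\<lambda>a. if (i,j,True) \<in> EE n k pol a T then v i j else 0))"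
    by (rule integral_sum2) auto
  also have "\<dots> = (\<Sum>i<n. \<Sum>j<k. v i j * (p i j * yv i j))"
    by (intro sum.cong refl) (simp add: expectation_ind acc)
  also have "\<dots> = lp_obj n k p v yv"
    unfolding lp_obj_def by (subst sum.swap) (simp add: mult.assoc)
  finally have R: "R_pol n k T D v pol = lp_obj n k p v yv" .
  have y01: "0 \<le> yv i j \<and> yv i j \<le> 1" for i j unfolding yv_def by simp
  have f1: "(\<Sum>i<n. yv i j) \<le> real T" if "j < k" for j
    unfolding yv_def
  proof (rule sum_prob_le)
    fix a
    let ?E = "EE n k pol a T"
    have fin: "finite ?E" unfolding EE_def by simp
    have "{i \<in> {..<n}. \<exists>b. (i,j,b) \<in> ?E} \<subseteq> fst ` {e \<in> ?E. fst (snd e) = j}" by force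
    then have "card {i \<in> {..<n}. \<exists>b. (i,j,b) \<in> ?E} \<le> card (fst ` {e \<in> ?E. fst (snd e) = j})"
      by (intro card_mono) (use fin in auto)
    also have "\<dots> \<le> card {e \<in> ?E. fst (snd e) = j}" by (rule card_image_le) (use fin in auto)
    also have "\<dots> \<le> T" by (rule inv_count)
    finally show "card {i \<in> {..<n}. \<exists>b. (i,j,b) \<in> ?E} \<le> T" .
  qed simp
  have f2: "(\<Sum>i<n. p i j * yv i j) \<le> 1" if "j < k" for j
  proof -
    have "(\<Sum>i<n. p i j * yv i j) = (\<Sum>i<n. measure_pmf.prob ?M {a. (i,j,True) \<in> EE n k pol a T})"
      using acc that by simp
    also have "\<dots> \<le> real 1"
    proof (rule sum_prob_le)
      fix a
      show "card {i \<in> {..<n}. (i,j,True) \<in> EE n k pol a T} \<le> 1"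
      proof -
        have "card {i \<in> {..<n}. (i,j,True) \<in> EE n k pol a T} \<le> Suc 0"
          by (subst card_le_Suc0_iff_eq) (auto intro: inv_acc_unique)
        then show ?thesis by simp
      qed
    qed simp
    finally show ?thesis by simp
  qed
  have f3: "(\<Sum>j<k. yv i j) \<le> 1" if "i < n" for i
  proof -
    have "(\<Sum>j<k. yv i j) \<le> real 1"
      unfolding yv_def
    proof (rule sum_prob_le)
      fix a
      show "card {j \<in> {..<k}. \<exists>b. (i,j,b) \<in> EE n k pol a T} \<le> 1"
      proof -
        have "card {j \<in> {..<k}. \<exists>b. (i,j,b) \<in> EE n k pol a T} \<le> Suc 0"
          by (subst card_le_Suc0_iff_eq) (auto intro: inv_cand_unique)
        then show ?thesis by simp
      qed
    qed simp
    then show ?thesis by simp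
  qed
  have feas: "lp_feasible n k T p yv"
    unfolding lp_feasible_def using f1 f2 f3 y01 by blast
  have "lp_obj n k p v yv \<le> lp_obj n k p v y" using opt feas unfolding lp_optimal_def by blast
  moreover have "0 \<le> lp_obj n k p v yv"
    unfolding lp_obj_def using hp hv y01 by (intro sum_nonneg) auto
  ultimately show ?thesis using R by simp
qed

lemma LP_eq:
  assumes "lp_optimal n k T p v y"
  shows "LP_par n k T p v = lp_obj n k p v y"
  unfolding LP_par_def
  by (rule cSup_eq_maximum) (use assms in \<open>auto simp: lp_optimal_def\<close>)

lemma OPT_le_LP:
  assumes hp: "\<forall>i<n. \<forall>j<k. 0 \<le> p i j \<and> p i j \<le> 1"
    and hv: "\<forall>i<n. \<forall>j<k. 0 \<le> v i j"
    and hD: "\<forall>i<n. \<forall>j<k. measure_pmf.prob (D i) {a. a j} = p i j"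
    and opt: "lp_optimal n k T p v y"
  shows "OPT_par n k T D v \<le> LP_par n k T p v"
  unfolding OPT_par_def LP_eq[OF opt]
proof (rule cSUP_least)
  fix Q
  have b: "\<And>pol. 0 \<le> R_pol n k T D v pol \<and> R_pol n k T D v pol \<le> lp_obj n k p v y"
    using R_pol_bound[OF hp hv hD opt] by blast
  show "R_rand n k T D v Q \<le> lp_obj n k p v y"
    unfolding R_rand_def
  proof (rule measure_pmf.integral_le_const)
    show "integrable (measure_pmf Q) (R_pol n k T D v)"
      by (rule pmf_integrable_bound[where B="lp_obj n k p v y"]) (use b in \<open>auto simp: abs_of_nonneg\<close>)
  qed (use b in auto)
qed simp


definition mx :: "nat set \<Rightarrow> (nat \<Rightarrow> real) \<Rightarrow> (nat \<Rightarrow> bool) \<Rightarrow> real" where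
  "mx S w z = Max (insert 0 {w i | i. i \<in> S \<and> z i})"

lemma alg_some:
  assumes "alg_policy n k v Y h j = Some i"
  shows "j < k \<and> \<not> filled h j \<and> i < n \<and> Y i j \<and> \<not> offered h i \<and>
         (\<forall>i'. i' < n \<and> Y i' j \<and> \<not> offered h i' \<longrightarrow> v i' j \<le> v i j)"
proof -
  let ?C = "{i. i < n \<and> Y i j \<and> \<not> offered h i}"
  have c: "j < k \<and> \<not> filled h j \<and> ?C \<noteq> {}" and i: "i = (LEAST i. i \<in> ?C \<and> (\<forall>i'\<in>?C. v i' j \<le> v i j))"
    using assms unfolding alg_policy_def Let_def by (auto split: if_splits)
  have fin: "finite ?C" by simp
  have "Max ((\<lambda>x. v x j) ` ?C) \<in> (\<lambda>x. v x j) ` ?C" using c fin by (intro Max_in) auto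
  then obtain m where m: "m \<in> ?C" "v m j = Max ((\<lambda>x. v x j) ` ?C)" by auto
  have mx: "\<forall>i'\<in>?C. v i' j \<le> v m j" using m fin by auto
  have ex: "\<exists>x. x \<in> ?C \<and> (\<forall>i'\<in>?C. v i' j \<le> v x j)" using m(1) mx by blast
  have "i \<in> ?C \<and> (\<forall>i'\<in>?C. v i' j \<le> v i j)"
    unfolding i by (rule LeastI_ex[OF ex])
  then show ?thesis using c by blast
qed

lemma alg_none:
  assumes "alg_policy n k v Y h j = None" "j < k" "\<not> filled h j"
  shows "\<forall>i. i < n \<and> Y i j \<longrightarrow> offered h i"
  using assms unfolding alg_policy_def Let_def by (auto split: if_splits)

lemma alg_valid:
  assumes HD: "\<forall>i<n. \<forall>j j'. j<k \<longrightarrow> j'<k \<longrightarrow> Y i j \<longrightarrow> Y i j' \<longrightarrow> j = j'"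
  shows "valid_round n k h (alg_policy n k v Y h)"
proof -
  have A: "\<forall>j i. alg_policy n k v Y h j = Some i \<longrightarrow> j < k \<and> \<not> filled h j \<and> i < n \<and> \<not> offered h i"
    using alg_some by blast
  have B: "\<forall>j j' i. alg_policy n k v Y h j = Some i \<and> alg_policy n k v Y h j' = Some i \<longrightarrow> j = j'"
  proof (intro allI impI)
    fix j j' i assume "alg_policy n k v Y h j = Some i \<and> alg_policy n k v Y h j' = Some i"
    then have "j < k \<and> i < n \<and> Y i j" "j' < k \<and> Y i j'" using alg_some[of n k v Y h j i] alg_some[of n k v Y h j' i] by auto
    then show "j = j'" using HD by blast
  qed
  show ?thesis unfolding valid_round_def using A B by blast
qed

context
  fixes n k T :: nat and v :: "nat \<Rightarrow> nat \<Rightarrow> real" and Y :: "nat \<Rightarrow> nat \<Rightarrow> bool" and a :: "nat \<Rightarrow> nat \<Rightarrow> bool"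
  assumes HD: "\<forall>i<n. \<forall>j j'. j<k \<longrightarrow> j'<k \<longrightarrow> Y i j \<longrightarrow> Y i j' \<longrightarrow> j = j'"
begin

abbreviation "pol \<equiv> alg_policy n k v Y"

lemma RR_alg: "(i,j,b) \<in> RR n k pol a t \<longleftrightarrow> j < k \<and> b = a i j \<and> pol (run n k pol a t) j = Some i"
  unfolding set_round using alg_valid[OF HD] by auto

lemma J1: "(i,j,b) \<in> EE n k pol a t \<Longrightarrow> Y i j"
proof (induction t)
  case 0 then show ?case by simp
next
  case (Suc t)
  then have "(i,j,b) \<in> EE n k pol a t \<or> (i,j,b) \<in> RR n k pol a t" by (simp add: EE_Suc)
  then show ?case using Suc.IH RR_alg alg_some by blast
qed

lemma offered_same_pos:
  assumes "(i0,j',b) \<in> EE n k pol a t" "i0 < n" "Y i0 j" "j < k"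
  shows "j' = j \<and> b = a i0 j"
  using assms inv1[OF assms(1)] J1[OF assms(1)] HD by blast

lemma J3: "(i,j,True) \<in> EE n k pol a t \<Longrightarrow> i0 < n \<Longrightarrow> Y i0 j \<Longrightarrow> a i0 j \<Longrightarrow> v i0 j \<le> v i j"
proof (induction t)
  case 0 then show ?case by simp
next
  case (Suc t)
  let ?h = "run n k pol a t"
  from Suc.prems(1) have "(i,j,True) \<in> EE n k pol a t \<or> (i,j,True) \<in> RR n k pol a t" by (simp add: EE_Suc)
  then show ?case
  proof
    assume "(i,j,True) \<in> EE n k pol a t" then show ?thesis using Suc by blast
  next
    assume "(i,j,True) \<in> RR n k pol a t"
    then have s: "pol ?h j = Some i" and jk: "j < k" using RR_alg by auto
    note as = alg_some[OF s]
    show ?thesis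
    proof (cases "offered ?h i0")
      case False then show ?thesis using as Suc.prems by blast
    next
      case True
      then obtain j' b where "(i0,j',b) \<in> EE n k pol a t" unfolding offered_EE by blast
      then have "(i0,j,True) \<in> EE n k pol a t" using offered_same_pos[of i0 j' b t j] Suc.prems jk by auto
      then have "filled ?h j" unfolding filled_EE by blast
      then show ?thesis using as by blast
    qed
  qed
qed

lemma EE_mono: "EE n k pol a t \<subseteq> EE n k pol a (Suc t)" by (simp add: EE_Suc)

lemma J2:
  assumes "j < k" "\<not> filled (run n k pol a t) j"
  shows "min t (card {i. i < n \<and> Y i j}) \<le> card {i. i < n \<and> Y i j \<and> offered (run n k pol a t) i}"
  using assms(2)
proof (induction t)
  case 0 then show ?case by simp
next
  case (Suc t)
  let ?h = "run n k pol a t"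
  let ?L = "{i. i < n \<and> Y i j}"
  let ?O = "\<lambda>t. {i. i < n \<and> Y i j \<and> offered (run n k pol a t) i}"
  have nf: "\<not> filled ?h j" using Suc.prems EE_mono unfolding filled_EE by blast
  have IH: "min t (card ?L) \<le> card (?O t)" using Suc.IH nf .
  have sub: "?O t \<subseteq> ?O (Suc t)" using EE_mono unfolding offered_EE by blast
  have finO: "finite (?O (Suc t))" by simp
  show ?case
  proof (cases "pol ?h j")
    case None
    then have "\<forall>i. i < n \<and> Y i j \<longrightarrow> offered ?h i" using alg_none assms(1) nf by blast
    then have "?L \<subseteq> ?O t" by blast
    then have "card ?L \<le> card (?O (Suc t))" using sub finO by (meson card_mono subset_trans)
    then show ?thesis by simp
  next
    case (Some i)
    note as = alg_some[OF Some]
    have "(i,j,a i j) \<in> RR n k pol a t" using RR_alg Some assms(1) by blast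
    then have "offered (run n k pol a (Suc t)) i" unfolding offered_EE EE_Suc by blast
    then have ins: "insert i (?O t) \<subseteq> ?O (Suc t)" using as sub by blast
    have ni: "i \<notin> ?O t" using as by blast
    have c1: "card (insert i (?O t)) \<le> card (?O (Suc t))" using card_mono[OF finO ins] .
    have c2: "card (insert i (?O t)) = card (?O t) + 1" using ni by simp
    have "card (?O t) + 1 \<le> card (?O (Suc t))" using c1 c2 by simp
    then show ?thesis using IH by linarith
  qed
qed

lemma alg_final:
  assumes HL: "card {i. i < n \<and> Y i j} \<le> T" and jk: "j < k"
    and i0: "i0 < n" "Y i0 j" "a i0 j"
  shows "\<exists>i. (i,j,True) \<in> EE n k pol a T \<and> v i0 j \<le> v i j"
proof (cases "filled (run n k pol a T) j")
  case True
  then obtain i where "(i,j,True) \<in> EE n k pol a T" unfolding filled_EE by blast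
  then show ?thesis using J3 i0 by blast
next
  case False
  let ?L = "{i. i < n \<and> Y i j}"
  let ?O = "{i. i < n \<and> Y i j \<and> offered (run n k pol a T) i}"
  have "min T (card ?L) \<le> card ?O" using J2[OF jk False] .
  then have "card ?L \<le> card ?O" using HL by simp
  moreover have "?O \<subseteq> ?L" by blast
  ultimately have "?O = ?L" by (intro card_seteq) auto
  then have "offered (run n k pol a T) i0" using i0 by blast
  then obtain j' b where "(i0,j',b) \<in> EE n k pol a T" unfolding offered_EE by blast
  then have "(i0,j,True) \<in> EE n k pol a T" using offered_same_pos[of i0 j' b T j] i0 jk by auto
  then show ?thesis using False unfolding filled_EE by blast
qed

lemma alg_reward:
  assumes HL: "\<forall>j<k. card {i. i < n \<and> Y i j} \<le> T" and Hv: "\<forall>i<n. \<forall>j<k. 0 \<le> v i j"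
  shows "(\<Sum>j<k. mx {..<n} (\<lambda>i. v i j) (\<lambda>i. Y i j \<and> a i j)) \<le> reward v (run n k pol a T)"
proof -
  have "reward v (run n k pol a T) = (\<Sum>j<k. \<Sum>i<n. if (i,j,True) \<in> EE n k pol a T then v i j else 0)"
    unfolding reward_eq by (rule sum.swap)
  moreover have per_j: "mx {..<n} (\<lambda>i. v i j) (\<lambda>i. Y i j \<and> a i j) \<le> (\<Sum>i<n. if (i,j,True) \<in> EE n k pol a T then v i j else 0)"
    if jk: "j < k" for j
  proof -
    let ?A = "{v i j | i. i \<in> {..<n} \<and> (Y i j \<and> a i j)}"
    have finA: "finite ?A" by simp
    have nn: "\<And>i. i \<in> {..<n} \<Longrightarrow> 0 \<le> (if (i,j,True) \<in> EE n k pol a T then v i j else 0)"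
      using Hv jk by auto
    have "Max (insert 0 ?A) \<in> insert 0 ?A" using finA by (intro Max_in) auto
    then consider "Max (insert 0 ?A) = 0" | i0 where "i0 < n" "Y i0 j" "a i0 j" "Max (insert 0 ?A) = v i0 j"
      by auto
    then show ?thesis
    proof cases
      case 1 then show ?thesis unfolding mx_def using nn by (auto intro!: sum_nonneg)
    next
      case 2
      then obtain i where i: "(i,j,True) \<in> EE n k pol a T" "v i0 j \<le> v i j"
        using alg_final[of j i0] HL jk by blast
      have "i < n" using inv1[OF i(1)] by simp
      then have "(if (i,j,True) \<in> EE n k pol a T then v i j else 0) \<le> (\<Sum>i<n. if (i,j,True) \<in> EE n k pol a T then v i j else 0)"
        by (intro member_le_sum nn) auto
      then show ?thesis unfolding mx_def using 2 i by simp
    qed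
  qed
  moreover have "(\<Sum>j<k. mx {..<n} (\<lambda>i. v i j) (\<lambda>i. Y i j \<and> a i j)) \<le> (\<Sum>j<k. \<Sum>i<n. if (i,j,True) \<in> EE n k pol a T then v i j else 0)"
    by (rule sum_mono) (simp add: per_j)
  ultimately show ?thesis by simp
qed

end


lemma mx_nonneg: "finite S \<Longrightarrow> 0 \<le> mx S w z"
  unfolding mx_def by (intro Max_ge) auto

lemma mx_le_sum: "finite S \<Longrightarrow> mx S w z \<le> (\<Sum>i\<in>S. \<bar>w i\<bar>)"
  unfolding mx_def
proof (intro Max.boundedI)
  assume "finite S"
  then show "finite (insert 0 {w i |i. i \<in> S \<and> z i})" by simp
  show "insert 0 {w i |i. i \<in> S \<and> z i} \<noteq> {}" by simp
  fix x assume "x \<in> insert 0 {w i |i. i \<in> S \<and> z i}"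
  then consider "x = 0" | i where "i \<in> S" "x = w i" by auto
  then show "x \<le> (\<Sum>i\<in>S. \<bar>w i\<bar>)"
  proof cases
    case 1 then show ?thesis by (simp add: sum_nonneg)
  next
    case 2
    then have "\<bar>w i\<bar> \<le> (\<Sum>i\<in>S. \<bar>w i\<bar>)" using \<open>finite S\<close> by (intro member_le_sum) auto
    then show ?thesis using 2 by simp
  qed
qed

lemma mx_ge: "finite S \<Longrightarrow> i \<in> S \<Longrightarrow> z i \<Longrightarrow> w i \<le> mx S w z"
  unfolding mx_def by (intro Max_ge) auto

lemma mx_decomp:
  assumes fin: "finite S" and m: "m \<in> S" and wm: "\<forall>i\<in>S. w m \<le> w i"
  shows "(if \<exists>i\<in>S. z i then w m else 0) + mx (S-{m}) (\<lambda>i. w i - w m) z \<le> mx S w z"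
proof (cases "\<exists>i\<in>S. z i")
  case False
  then have "{w i - w m |i. i \<in> S-{m} \<and> z i} = {}" by auto
  then have "mx (S-{m}) (\<lambda>i. w i - w m) z = 0" unfolding mx_def by (simp only:) simp
  then show ?thesis using False mx_nonneg[OF fin] by simp
next
  case True
  then obtain i1 where i1: "i1 \<in> S" "z i1" by blast
  let ?A = "{w i - w m |i. i \<in> S-{m} \<and> z i}"
  have "Max (insert 0 ?A) \<in> insert 0 ?A" using fin by (intro Max_in) auto
  then consider "mx (S-{m}) (\<lambda>i. w i - w m) z = 0"
    | i2 where "i2 \<in> S-{m}" "z i2" "mx (S-{m}) (\<lambda>i. w i - w m) z = w i2 - w m"
    unfolding mx_def by auto
  then show ?thesis
  proof cases
    case 1
    have "w m \<le> w i1" using wm i1 by blast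
    also have "\<dots> \<le> mx S w z" using mx_ge[where S=S and i=i1 and z=z and w=w] fin i1 by blast
    finally show ?thesis using 1 True by simp
  next
    case 2
    have "w i2 \<le> mx S w z" using mx_ge[where S=S and i=i2 and z=z and w=w] fin 2 by blast
    then show ?thesis using 2 True by simp
  qed
qed

lemma integrable_mx[intro]: "finite S \<Longrightarrow> integrable (measure_pmf M) (\<lambda>x. mx S w (Z x))"
  by (rule pmf_integrable_bound[where B="\<Sum>i\<in>S. \<bar>w i\<bar>"])
     (use mx_nonneg mx_le_sum in \<open>auto simp: abs_of_nonneg\<close>)

lemma integrable_of_bool[intro]: "integrable (measure_pmf M) (\<lambda>x. of_bool (P x) :: real)"
  by (rule pmf_integrable_bound[where B=1]) auto

lemma G_lemma:
  fixes M :: "'w pmf" and Z :: "'w \<Rightarrow> nat \<Rightarrow> bool" and q :: "nat \<Rightarrow> real"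
  assumes c: "0 \<le> c"
    and hyp: "\<And>U. U \<subseteq> S0 \<Longrightarrow> c * (\<Sum>i\<in>U. q i) \<le> measure_pmf.expectation M (\<lambda>x. of_bool (\<exists>i\<in>U. Z x i))"
    and fin0: "finite S0"
  shows "S \<subseteq> S0 \<Longrightarrow> (\<forall>i\<in>S. 0 \<le> w i) \<Longrightarrow>
     c * (\<Sum>i\<in>S. w i * q i) \<le> measure_pmf.expectation M (\<lambda>x. mx S w (Z x))"
proof (induction "card S" arbitrary: S w rule: less_induct)
  case less
  have finS: "finite S" using less.prems(1) fin0 finite_subset by blast
  show ?case
  proof (cases "S = {}")
    case True
    then show ?thesis by (simp add: mx_def)
  next
    case False
    have "Min (w ` S) \<in> w ` S" using finS False by (intro Min_in) auto
    then obtain m where m: "m \<in> S" "w m = Min (w ` S)" by auto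
    have wm: "\<forall>i\<in>S. w m \<le> w i" using m finS by auto
    let ?S' = "S - {m}"
    let ?w' = "\<lambda>i. w i - w m"
    have card': "card ?S' < card S" using m finS by (meson card_Diff1_less)
    have IH: "c * (\<Sum>i\<in>?S'. ?w' i * q i) \<le> measure_pmf.expectation M (\<lambda>x. mx ?S' ?w' (Z x))"
      using less.hyps[OF card', of ?w'] less.prems wm by auto
    have H: "c * (\<Sum>i\<in>S. q i) \<le> measure_pmf.expectation M (\<lambda>x. of_bool (\<exists>i\<in>S. Z x i))"
      using hyp less.prems(1) by blast
    have wm0: "0 \<le> w m" using less.prems(2) m by blast
    have finS': "finite ?S'" using finS by simp
    have "measure_pmf.expectation M (\<lambda>x. w m * of_bool (\<exists>i\<in>S. Z x i) + mx ?S' ?w' (Z x))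
          \<le> measure_pmf.expectation M (\<lambda>x. mx S w (Z x))"
    proof (rule integral_mono)
      show "integrable (measure_pmf M) (\<lambda>x. w m * of_bool (\<exists>i\<in>S. Z x i) + mx ?S' ?w' (Z x))"
        using finS' by (intro Bochner_Integration.integrable_add integrable_mult_right) auto
      show "integrable (measure_pmf M) (\<lambda>x. mx S w (Z x))" using finS by auto
      fix x
      show "w m * of_bool (\<exists>i\<in>S. Z x i) + mx ?S' ?w' (Z x) \<le> mx S w (Z x)"
        using mx_decomp[OF finS m(1) wm, of "Z x"] by (cases "\<exists>i\<in>S. Z x i") auto
    qed
    moreover have "measure_pmf.expectation M (\<lambda>x. w m * of_bool (\<exists>i\<in>S. Z x i) + mx ?S' ?w' (Z x))
        = w m * measure_pmf.expectation M (\<lambda>x. of_bool (\<exists>i\<in>S. Z x i)) + measure_pmf.expectation M (\<lambda>x. mx ?S' ?w' (Z x))"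
      using finS' by (subst Bochner_Integration.integral_add) auto
    moreover have "w m * (c * (\<Sum>i\<in>S. q i)) \<le> w m * measure_pmf.expectation M (\<lambda>x. of_bool (\<exists>i\<in>S. Z x i))"
      using H wm0 by (rule mult_left_mono)
    moreover have "c * (\<Sum>i\<in>S. w i * q i) = w m * (c * (\<Sum>i\<in>S. q i)) + c * (\<Sum>i\<in>?S'. ?w' i * q i)"
    proof -
      have e1: "(\<Sum>i\<in>S. w i * q i) = w m * q m + (\<Sum>i\<in>?S'. w i * q i)" using finS m(1) by (simp add: sum.remove)
      have e2: "(\<Sum>i\<in>S. q i) = q m + (\<Sum>i\<in>?S'. q i)" using finS m(1) by (simp add: sum.remove)
      have e3: "(\<Sum>i\<in>?S'. ?w' i * q i) = (\<Sum>i\<in>?S'. w i * q i) - w m * (\<Sum>i\<in>?S'. q i)"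
        by (simp add: left_diff_distrib sum_subtractf sum_distrib_left)
      have alg: "\<And>A B. c * (w m * q m + A) = w m * (c * (q m + B)) + c * (A - w m * B)"
        by (simp add: algebra_simps)
      show ?thesis unfolding e1 e2 e3 by (rule alg)
    qed
    ultimately show ?thesis using IH by linarith
  qed
qed

lemma exp_ineq:
  fixes x :: "nat \<Rightarrow> real"
  assumes "finite U" "\<forall>i\<in>U. 0 \<le> x i \<and> x i \<le> 1" "(\<Sum>i\<in>U. x i) \<le> 1"
  shows "(1 - 1 / exp 1) * (\<Sum>i\<in>U. x i) \<le> 1 - (\<Prod>i\<in>U. (1 - x i))"
proof -
  let ?s = "\<Sum>i\<in>U. x i"
  have s0: "0 \<le> ?s" using assms by (intro sum_nonneg) auto
  have "(\<Prod>i\<in>U. (1 - x i)) \<le> (\<Prod>i\<in>U. exp (- x i))"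
  proof (rule prod_mono)
    fix i assume "i \<in> U"
    then show "0 \<le> 1 - x i \<and> 1 - x i \<le> exp (- x i)"
      using assms(2) exp_ge_add_one_self[of "- x i"] by auto
  qed
  also have "\<dots> = exp (- ?s)" using exp_sum[of U "\<lambda>i. - x i"] assms(1) by (simp add: sum_negf)
  also have "exp (- ?s) \<le> (1 - ?s) * exp 0 + ?s * exp (-1)"
    using convex_onD[OF exp_convex, of ?s 0 "-1"] s0 assms(3) by simp
  also have "\<dots> = 1 - (1 - 1 / exp 1) * ?s" by (simp add: exp_minus field_simps)
  finally show ?thesis by simp
qed


lemma prob_compl_pmf: "measure_pmf.prob M {x. \<not> P x} = 1 - measure_pmf.prob M {x. P x}"
proof -
  have "{x. \<not> P x} = space (measure_pmf M) - {x. P x}" by auto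
  then show ?thesis using measure_pmf.prob_compl[of "{x. P x}" M] by simp
qed

lemma prod_of_bool: "finite W \<Longrightarrow> (\<Prod>i\<in>W. of_bool (P i) :: real) = of_bool (\<forall>i\<in>W. P i)"
  by (induction W rule: finite_induct) auto

lemma gkps_P1: "gkps_rounding n k y Yd \<Longrightarrow> \<forall>i<n. \<forall>j<k. measure_pmf.prob Yd {Y. Y i j} = y i j"
  unfolding gkps_rounding_def by (erule conjunct1)
lemma gkps_P2c: "gkps_rounding n k y Yd \<Longrightarrow> (\<forall>Y\<in>set_pmf Yd. \<forall>i<n.
        real (card {j. j < k \<and> Y i j}) \<in> {of_int \<lfloor>\<Sum>j<k. y i j\<rfloor>, of_int \<lceil>\<Sum>j<k. y i j\<rceil>})"
  unfolding gkps_rounding_def by (erule conjunct2[THEN conjunct1])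
lemma gkps_P2p: "gkps_rounding n k y Yd \<Longrightarrow> (\<forall>Y\<in>set_pmf Yd. \<forall>j<k.
        real (card {i. i < n \<and> Y i j}) \<in> {of_int \<lfloor>\<Sum>i<n. y i j\<rfloor>, of_int \<lceil>\<Sum>i<n. y i j\<rceil>})"
  unfolding gkps_rounding_def by (erule conjunct2[THEN conjunct2, THEN conjunct1])
lemma gkps_P3p: "gkps_rounding n k y Yd \<Longrightarrow> (\<forall>j<k. \<forall>S\<subseteq>{..<n}. \<forall>b.
        measure_pmf.prob Yd {Y. \<forall>i\<in>S. Y i j = b} \<le> (\<Prod>i\<in>S. measure_pmf.prob Yd {Y. Y i j = b}))"
  unfolding gkps_rounding_def by (erule conjunct2[THEN conjunct2, THEN conjunct2, THEN conjunct2])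

lemma inner_prob:
  assumes U: "U \<subseteq> {..<n}" and j: "j < k"
    and hD: "\<forall>i<n. \<forall>j<k. measure_pmf.prob (D i) {a. a j} = p i j"
  shows "measure_pmf.expectation (accept_dist n D) (\<lambda>a. of_bool (\<exists>i\<in>U. Y i j \<and> a i j))
         = 1 - (\<Prod>i\<in>U. (1 - p i j * of_bool (Y i j)))"
proof -
  let ?M = "accept_dist n D"
  define B where "B i = (if i \<in> U then {f. \<not> (Y i j \<and> f j)} else UNIV)" for i
  have "measure_pmf.expectation ?M (\<lambda>a. of_bool (\<exists>i\<in>U. Y i j \<and> a i j) :: real)
      = measure_pmf.expectation ?M (\<lambda>a. 1 - of_bool (\<forall>i\<in>U. \<not> (Y i j \<and> a i j)))"
    by (intro Bochner_Integration.integral_cong refl) auto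
  also have "\<dots> = 1 - measure_pmf.expectation ?M (\<lambda>a. of_bool (\<forall>i\<in>U. \<not> (Y i j \<and> a i j)))"
    by (subst Bochner_Integration.integral_diff) auto
  also have "measure_pmf.expectation ?M (\<lambda>a. of_bool (\<forall>i\<in>U. \<not> (Y i j \<and> a i j)) :: real)
      = measure_pmf.prob ?M {a. \<forall>i\<in>U. \<not> (Y i j \<and> a i j)}"
    by (rule prob_as_expectation[symmetric])
  also have "{a. \<forall>i\<in>U. \<not> (Y i j \<and> a i j)} = Pi {..<n} B"
    using U unfolding B_def Pi_def by auto
  also have "measure_pmf.prob ?M (Pi {..<n} B) = (\<Prod>i<n. measure_pmf.prob (D i) (B i))"
    unfolding accept_dist_def by (rule measure_Pi_pmf_Pi) simp
  also have "\<dots> = (\<Prod>i<n. if i \<in> U then 1 - p i j * of_bool (Y i j) else 1)"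
  proof (intro prod.cong refl)
    fix i assume i: "i \<in> {..<n}"
    show "measure_pmf.prob (D i) (B i) = (if i \<in> U then 1 - p i j * of_bool (Y i j) else 1)"
    proof (cases "i \<in> U")
      case True
      then show ?thesis
      proof (cases "Y i j")
        case True
        have "measure_pmf.prob (D i) {f. \<not> f j} = 1 - p i j"
          using prob_compl_pmf[of "D i" "\<lambda>f. f j"] hD i j by simp
        then show ?thesis using True \<open>i \<in> U\<close> unfolding B_def by simp
      next
        case False
        then show ?thesis using \<open>i \<in> U\<close> unfolding B_def by simp
      qed
    next
      case False
      then show ?thesis unfolding B_def by simp
    qed
  qed
  also have "\<dots> = (\<Prod>i\<in>U. 1 - p i j * of_bool (Y i j))"
  proof -
    have "{..<n} \<inter> {i. i \<in> U} = U" using U by auto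
    then show ?thesis by (simp add: prod.If_cases)
  qed
  finally show ?thesis .
qed

lemma neg_corr:
  assumes U: "U \<subseteq> {..<n}" and j: "j < k"
    and hp: "\<forall>i<n. \<forall>j<k. 0 \<le> p i j \<and> p i j \<le> 1"
    and G: "gkps_rounding n k y Yd"
  shows "measure_pmf.expectation Yd (\<lambda>Y. \<Prod>i\<in>U. (1 - p i j * of_bool (Y i j)))
         \<le> (\<Prod>i\<in>U. (1 - p i j * y i j))"
proof -
  have finU: "finite U" using U finite_subset by blast
  define coef where "coef W = (\<Prod>i\<in>W. p i j) * (\<Prod>i\<in>U-W. 1 - p i j)" for W
  have coef0: "0 \<le> coef W" if "W \<subseteq> U" for W
    unfolding coef_def using hp U j that by (intro mult_nonneg_nonneg prod_nonneg) auto
  have pw: "(\<Prod>i\<in>U. (1 - p i j * of_bool (Y i j))) = (\<Sum>W\<in>Pow U. coef W * of_bool (\<forall>i\<in>W. \<not> Y i j))" for Y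
  proof -
    have "(\<Prod>i\<in>U. (1 - p i j * of_bool (Y i j))) = (\<Prod>i\<in>U. p i j * of_bool (\<not> Y i j) + (1 - p i j))"
      by (intro prod.cong refl) auto
    also have "\<dots> = (\<Sum>W\<in>Pow U. (\<Prod>i\<in>W. p i j * of_bool (\<not> Y i j)) * (\<Prod>i\<in>U-W. 1 - p i j))"
      by (rule prod_add[OF finU])
    also have "\<dots> = (\<Sum>W\<in>Pow U. coef W * of_bool (\<forall>i\<in>W. \<not> Y i j))"
    proof (intro sum.cong refl)
      fix W assume "W \<in> Pow U"
      then have "finite W" using finU finite_subset by auto
      then show "(\<Prod>i\<in>W. p i j * of_bool (\<not> Y i j)) * (\<Prod>i\<in>U-W. 1 - p i j) = coef W * of_bool (\<forall>i\<in>W. \<not> Y i j)"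
        unfolding coef_def by (simp add: prod.distrib prod_of_bool)
    qed
    finally show ?thesis .
  qed
  have P3: "measure_pmf.prob Yd {Y. \<forall>i\<in>W. Y i j = False} \<le> (\<Prod>i\<in>W. 1 - y i j)" if W: "W \<subseteq> U" for W
  proof -
    have "measure_pmf.prob Yd {Y. \<forall>i\<in>W. Y i j = False} \<le> (\<Prod>i\<in>W. measure_pmf.prob Yd {Y. Y i j = False})"
      using gkps_P3p[OF G] W U j by blast
    also have "\<dots> = (\<Prod>i\<in>W. 1 - y i j)"
    proof (intro prod.cong refl)
      fix i assume "i \<in> W"
      then have "i < n" using W U by auto
      then have "measure_pmf.prob Yd {Y. Y i j} = y i j" using gkps_P1[OF G] j by blast
      then show "measure_pmf.prob Yd {Y. Y i j = False} = 1 - y i j"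
        using prob_compl_pmf[of Yd "\<lambda>Y. Y i j"] by simp
    qed
    finally show ?thesis .
  qed
  have "measure_pmf.expectation Yd (\<lambda>Y. \<Prod>i\<in>U. (1 - p i j * of_bool (Y i j)))
      = measure_pmf.expectation Yd (\<lambda>Y. \<Sum>W\<in>Pow U. coef W * of_bool (\<forall>i\<in>W. \<not> Y i j))"
    by (simp add: pw)
  also have "\<dots> = (\<Sum>W\<in>Pow U. coef W * measure_pmf.expectation Yd (\<lambda>Y. of_bool (\<forall>i\<in>W. \<not> Y i j)))"
    by (subst Bochner_Integration.integral_sum) auto
  also have "\<dots> = (\<Sum>W\<in>Pow U. coef W * measure_pmf.prob Yd {Y. \<forall>i\<in>W. Y i j = False})"
    by (simp add: prob_as_expectation)
  also have "\<dots> \<le> (\<Sum>W\<in>Pow U. coef W * (\<Prod>i\<in>W. 1 - y i j))"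
    by (intro sum_mono mult_left_mono P3 coef0) auto
  also have "\<dots> = (\<Sum>W\<in>Pow U. (\<Prod>i\<in>W. p i j * (1 - y i j)) * (\<Prod>i\<in>U-W. 1 - p i j))"
    unfolding coef_def by (intro sum.cong refl) (simp add: prod.distrib)
  also have "\<dots> = (\<Prod>i\<in>U. p i j * (1 - y i j) + (1 - p i j))"
    by (rule prod_add[OF finU, symmetric])
  also have "\<dots> = (\<Prod>i\<in>U. (1 - p i j * y i j))"
    by (intro prod.cong refl) (simp add: algebra_simps)
  finally show ?thesis .
qed


lemma card_bound:
  assumes "real (card X) \<in> {of_int \<lfloor>s\<rfloor>, of_int \<lceil>s\<rceil>}" "s \<le> real T"
  shows "card X \<le> T"
proof -
  have "\<lceil>s\<rceil> \<le> int T" using assms(2) by (simp add: ceiling_le)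
  then have c: "real_of_int \<lceil>s\<rceil> \<le> real T" by linarith
  have f: "real_of_int \<lfloor>s\<rfloor> \<le> real T" using assms(2) of_int_floor_le[of s] by linarith
  have "real (card X) \<le> real T" using assms(1) c f by auto
  then show ?thesis by simp
qed

lemma hyp_j:
  assumes j: "j < k" and U: "U \<subseteq> {..<n}"
    and hp: "\<forall>i<n. \<forall>j<k. 0 \<le> p i j \<and> p i j \<le> 1"
    and hD: "\<forall>i<n. \<forall>j<k. measure_pmf.prob (D i) {a. a j} = p i j"
    and feas: "lp_feasible n k T p y"
    and G: "gkps_rounding n k y Yd"
  shows "(1 - 1 / exp 1) * (\<Sum>i\<in>U. p i j * y i j) \<le>
     measure_pmf.expectation (pair_pmf Yd (accept_dist n D)) (\<lambda>x. of_bool (\<exists>i\<in>U. fst x i j \<and> snd x i j))"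
proof -
  let ?A = "accept_dist n D"
  let ?\<Pi> = "\<lambda>Y. \<Prod>i\<in>U. (1 - p i j * of_bool (Y i j))"
  have finU: "finite U" using U finite_subset by blast
  have y01: "\<forall>i<n. 0 \<le> y i j \<and> y i j \<le> 1" using feas j unfolding lp_feasible_def by blast
  have fac: "0 \<le> 1 - p i j * of_bool (Y i j) \<and> 1 - p i j * of_bool (Y i j) \<le> 1" if "i \<in> U" for i Y
    using hp U j that by auto
  have Pi01: "0 \<le> ?\<Pi> Y \<and> ?\<Pi> Y \<le> 1" for Y
    using fac by (auto intro!: prod_nonneg prod_le_1)
  have "measure_pmf.expectation (pair_pmf Yd ?A) (\<lambda>x. of_bool (\<exists>i\<in>U. fst x i j \<and> snd x i j) :: real)
      = measure_pmf.expectation Yd (\<lambda>Y. measure_pmf.expectation ?A (\<lambda>a. of_bool (\<exists>i\<in>U. Y i j \<and> a i j)))"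
    using integral_pair_pmf_real[where f="\<lambda>x. of_bool (\<exists>i\<in>U. fst x i j \<and> snd x i j)" and B=1 and M=Yd and N="?A"]
    by simp
  also have "\<dots> = measure_pmf.expectation Yd (\<lambda>Y. 1 - ?\<Pi> Y)"
    by (intro Bochner_Integration.integral_cong refl inner_prob[where k=k] U j hD)
  also have "\<dots> = 1 - measure_pmf.expectation Yd ?\<Pi>"
  proof (subst Bochner_Integration.integral_diff)
    show "integrable (measure_pmf Yd) ?\<Pi>"
      by (rule pmf_integrable_bound[where B=1]) (use Pi01 in auto)
  qed auto
  finally have e: "measure_pmf.expectation (pair_pmf Yd ?A) (\<lambda>x. of_bool (\<exists>i\<in>U. fst x i j \<and> snd x i j) :: real)
      = 1 - measure_pmf.expectation Yd ?\<Pi>" .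
  have "measure_pmf.expectation Yd ?\<Pi> \<le> (\<Prod>i\<in>U. (1 - p i j * y i j))"
    by (rule neg_corr[OF U j hp G])
  moreover have "(1 - 1 / exp 1) * (\<Sum>i\<in>U. p i j * y i j) \<le> 1 - (\<Prod>i\<in>U. (1 - p i j * y i j))"
  proof (rule exp_ineq[OF finU])
    show "\<forall>i\<in>U. 0 \<le> p i j * y i j \<and> p i j * y i j \<le> 1"
    proof
      fix i assume "i \<in> U"
      then have "i < n" using U by auto
      then have "0 \<le> p i j" "p i j \<le> 1" "0 \<le> y i j" "y i j \<le> 1" using hp y01 j by auto
      then show "0 \<le> p i j * y i j \<and> p i j * y i j \<le> 1" by (simp add: mult_le_one)
    qed
    have "(\<Sum>i\<in>U. p i j * y i j) \<le> (\<Sum>i<n. p i j * y i j)"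
      using U hp y01 j by (intro sum_mono2) auto
    also have "\<dots> \<le> 1" using feas j unfolding lp_feasible_def by blast
    finally show "(\<Sum>i\<in>U. p i j * y i j) \<le> 1" .
  qed
  ultimately show ?thesis using e by linarith
qed


lemma integrable_reward[intro]: "integrable (measure_pmf M) (\<lambda>a. reward v (run n k pl a T))"
  unfolding reward_eq by (intro Bochner_Integration.integrable_sum integrable_if)

theorem theorem5p1:
  fixes n k T :: nat
    and p v y :: "nat \<Rightarrow> nat \<Rightarrow> real"
    and D :: "nat \<Rightarrow> (nat \<Rightarrow> bool) pmf"
    and Yd :: "(nat \<Rightarrow> nat \<Rightarrow> bool) pmf"
  assumes "1 \<le> k" and "k \<le> T" and "T \<le> n"
    and "\<forall>i<n. \<forall>j<k. 0 \<le> p i j \<and> p i j \<le> 1"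
    and "\<forall>i<n. \<forall>j<k. 0 \<le> v i j"
    and "\<forall>i<n. \<forall>j<k. measure_pmf.prob (D i) {a. a j} = p i j"
    and "lp_optimal n k T p v y"
    and "gkps_rounding n k y Yd"
  shows "R_alg n k T D v Yd \<ge> (1 - 1 / exp 1) * LP_par n k T p v
       \<and> (1 - 1 / exp 1) * LP_par n k T p v \<ge> (1 - 1 / exp 1) * OPT_par n k T D v"
proof -
  note hp = assms(4) and hv = assms(5) and hD = assms(6) and opt = assms(7) and G = assms(8)
  let ?c = "1 - 1 / exp 1 :: real"
  let ?A = "accept_dist n D"
  let ?P = "pair_pmf Yd ?A"
  let ?mx = "\<lambda>j (x :: (nat \<Rightarrow> nat \<Rightarrow> bool) \<times> (nat \<Rightarrow> nat \<Rightarrow> bool)). mx {..<n} (\<lambda>i. v i j) (\<lambda>i. fst x i j \<and> snd x i j)"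
  let ?F = "\<lambda>x. \<Sum>j<k. ?mx j x"
  let ?B = "\<Sum>j<k. \<Sum>i<n. \<bar>v i j\<bar>"
  have c0: "0 \<le> ?c"
  proof -
    have "1 \<le> exp (1::real)" by simp
    then have "1 / exp 1 \<le> (1::real)" by simp
    then show ?thesis by simp
  qed
  have feas: "lp_feasible n k T p y" using opt unfolding lp_optimal_def by blast
  have F0: "0 \<le> ?F x" for x by (intro sum_nonneg) (simp add: mx_nonneg)
  have FB: "?F x \<le> ?B" for x by (intro sum_mono) (simp add: mx_le_sum)
  have HL: "\<forall>j<k. card {i. i < n \<and> Y i j} \<le> T" if Y: "Y \<in> set_pmf Yd" for Y
  proof (intro allI impI)
    fix j assume j: "j < k"
    have "(\<Sum>i<n. y i j) \<le> real T" using feas j unfolding lp_feasible_def by blast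
    then show "card {i. i < n \<and> Y i j} \<le> T"
      using card_bound gkps_P2p[OF G] Y j by blast
  qed
  have HD: "\<forall>i<n. \<forall>j j'. j<k \<longrightarrow> j'<k \<longrightarrow> Y i j \<longrightarrow> Y i j' \<longrightarrow> j = j'" if Y: "Y \<in> set_pmf Yd" for Y
  proof (intro allI impI)
    fix i j j' assume i: "i < n" and jj: "j < k" "j' < k" "Y i j" "Y i j'"
    have "(\<Sum>j<k. y i j) \<le> real 1" using feas i unfolding lp_feasible_def by simp
    then have "card {j. j < k \<and> Y i j} \<le> 1"
      using card_bound gkps_P2c[OF G] Y i by blast
    then have "card {j. j < k \<and> Y i j} \<le> Suc 0" by simp
    then show "j = j'" using jj by (subst (asm) card_le_Suc0_iff_eq) auto
  qed
  have step1: "measure_pmf.expectation ?A (\<lambda>a. ?F (Y, a)) \<le> R_pol n k T D v (alg_policy n k v Y)"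
    if Y: "Y \<in> set_pmf Yd" for Y
    unfolding R_pol_def
  proof (rule integral_mono)
    show "integrable (measure_pmf ?A) (\<lambda>a. ?F (Y, a))"
      by (rule pmf_integrable_bound[where B="?B"]) (use F0 FB in \<open>auto simp: abs_of_nonneg\<close>)
    show "integrable (measure_pmf ?A) (\<lambda>a. reward v (run n k (alg_policy n k v Y) a T))" by auto
    fix a
    show "?F (Y, a) \<le> reward v (run n k (alg_policy n k v Y) a T)"
      using alg_reward[OF HD[OF Y] HL[OF Y] hv] by simp
  qed
  have Rb: "\<And>pol. 0 \<le> R_pol n k T D v pol \<and> R_pol n k T D v pol \<le> lp_obj n k p v y"
    using R_pol_bound[OF hp hv hD opt] by blast
  have "measure_pmf.expectation Yd (\<lambda>Y. measure_pmf.expectation ?A (\<lambda>a. ?F (Y, a))) \<le> R_alg n k T D v Yd"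
    unfolding R_alg_def
  proof (rule integral_mono_AE)
    show "integrable (measure_pmf Yd) (\<lambda>Y. measure_pmf.expectation ?A (\<lambda>a. ?F (Y, a)))"
      by (rule pmf_integrable_bound[where B="?B"])
         (use F0 FB in \<open>auto simp: abs_of_nonneg intro!: integral_nonneg_AE measure_pmf.integral_le_const pmf_integrable_bound[where B="?B"]\<close>)
    show "integrable (measure_pmf Yd) (\<lambda>Y. R_pol n k T D v (alg_policy n k v Y))"
      by (rule pmf_integrable_bound[where B="lp_obj n k p v y"]) (use Rb in \<open>auto simp: abs_of_nonneg\<close>)
    show "AE Y in measure_pmf Yd. measure_pmf.expectation ?A (\<lambda>a. ?F (Y, a)) \<le> R_pol n k T D v (alg_policy n k v Y)"
      using step1 by (simp add: AE_measure_pmf_iff)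
  qed
  moreover have "measure_pmf.expectation Yd (\<lambda>Y. measure_pmf.expectation ?A (\<lambda>a. ?F (Y, a))) = measure_pmf.expectation ?P ?F"
    using integral_pair_pmf_real[where f="?F" and B="?B" and M=Yd and N="?A"] F0 FB by simp
  moreover have "measure_pmf.expectation ?P ?F = (\<Sum>j<k. measure_pmf.expectation ?P (?mx j))"
    by (rule Bochner_Integration.integral_sum) auto
  moreover have "?c * (\<Sum>i<n. v i j * (p i j * y i j)) \<le> measure_pmf.expectation ?P (?mx j)" if j: "j < k" for j
  proof (rule G_lemma[where S0="{..<n}" and q="\<lambda>i. p i j * y i j" and M="?P"
        and Z="\<lambda>x i. fst x i j \<and> snd x i j" and S="{..<n}" and w="\<lambda>i. v i j", OF c0])
    fix U assume "U \<subseteq> {..<n}"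
    then show "?c * (\<Sum>i\<in>U. p i j * y i j) \<le> measure_pmf.expectation ?P (\<lambda>x. of_bool (\<exists>i\<in>U. fst x i j \<and> snd x i j))"
      using hyp_j[OF j _ hp hD feas G] by blast
  qed (use hv j in auto)
  then have "(\<Sum>j<k. ?c * (\<Sum>i<n. v i j * (p i j * y i j))) \<le> (\<Sum>j<k. measure_pmf.expectation ?P (?mx j))"
    by (intro sum_mono) auto
  moreover have "(\<Sum>j<k. ?c * (\<Sum>i<n. v i j * (p i j * y i j))) = ?c * LP_par n k T p v"
    unfolding LP_eq[OF opt] lp_obj_def by (simp add: sum_distrib_left mult.assoc)
  ultimately have part1: "?c * LP_par n k T p v \<le> R_alg n k T D v Yd" by linarith
  have part2: "?c * OPT_par n k T D v \<le> ?c * LP_par n k T p v"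
    using OPT_le_LP[OF hp hv hD opt] c0 by (rule mult_left_mono)
  show ?thesis using part1 part2 by simp
qed


end
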